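(* Let $(X,\preceq,T)$ be a quasi-total triple and define the relation $\preceq_T$ on $X$ by $a\preceq_T b:\Leftrightarrow \exists k\in\mathbb{N}_0:\ T^ka\preceq b$ (the completion). Then for all $a,b\in X$, $$\inf\{m\in\mathbb{Z}: a\preceq_T T^mb\}=\inf\{m\in\mathbb{Z}: a\preceq T^mb\},$$ i.e. $(X,\preceq,T)$ and $(X,\preceq_T,T)$ define the same height function; consequently, for any group acting dominatingly on $(X,\preceq,T)$, they give rise to the same translation number $g\mapsto\lim_{n\to\infty}\frac1n h_T(g^na,a)$.
   Context: For a poset $(X,\preceq)$, an order-preserving bijection $T$ is dominant if for all $a,b$ there is $n\in\mathbb{N}$ with $T^na\succ b$. $(X,\preceq,T)$ is a quasi-total triple if $T$ is a dominant order-preserving bijection and there is $N\in\mathbb{N}$ such that for all $a,b$ some $k\in\{0,\dots,N\}$ satisfies $a\preceq T^kb$ or $b\preceq T^ka$. The (relative $T$-)height function is $h_T(a,b)=\inf\{m\in\mathbb{Z}: T^mb\succeq a\}$. A dominating action of a group $G$ is an action by order-preserving bijections commuting with $T$ such that $g.x\succeq T^n.x$ for some $g\in G$, $x\in X$, $n\in\mathbb{N}$. *)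

theory Defs
  imports Main "HOL-Library.Extended_Real"
begin

definition poset :: "('a \<Rightarrow> 'a \<Rightarrow> bool) \<Rightarrow> bool" where
  "poset le \<longleftrightarrow> reflp le \<and> transp le \<and> antisymp le"

definition order_preserving_bij :: "('a \<Rightarrow> 'a \<Rightarrow> bool) \<Rightarrow> ('a \<Rightarrow> 'a) \<Rightarrow> bool" where
  "order_preserving_bij le T \<longleftrightarrow> bij T \<and> (\<forall>a b. le a b \<longleftrightarrow> le (T a) (T b))"

definition dominant :: "('a \<Rightarrow> 'a \<Rightarrow> bool) \<Rightarrow> ('a \<Rightarrow> 'a) \<Rightarrow> bool" where
  "dominant le T \<longleftrightarrow> order_preserving_bij le T \<and>
     (\<forall>a b. \<exists>n::nat. le b ((T ^^ n) a) \<and> (T ^^ n) a \<noteq> b)"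

definition quasi_total_triple :: "('a \<Rightarrow> 'a \<Rightarrow> bool) \<Rightarrow> ('a \<Rightarrow> 'a) \<Rightarrow> bool" where
  "quasi_total_triple le T \<longleftrightarrow> poset le \<and> dominant le T \<and>
     (\<exists>N::nat. \<forall>a b. \<exists>k\<le>N. le a ((T ^^ k) b) \<or> le b ((T ^^ k) a))"

definition completion :: "('a \<Rightarrow> 'a \<Rightarrow> bool) \<Rightarrow> ('a \<Rightarrow> 'a) \<Rightarrow> 'a \<Rightarrow> 'a \<Rightarrow> bool" where
  "completion le T a b \<longleftrightarrow> (\<exists>k::nat. le ((T ^^ k) a) b)"

definition Tpow :: "('a \<Rightarrow> 'a) \<Rightarrow> int \<Rightarrow> 'a \<Rightarrow> 'a" where
  "Tpow T m = (if 0 \<le> m then T ^^ nat m else (inv T) ^^ nat (- m))"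

text \<open>Relative T-height h_T(a,b) = inf{m \<in> Z. a \<preceq> T^m b}, valued in the extended reals
  (so that empty / unbounded sets are handled faithfully).\<close>
definition height :: "('a \<Rightarrow> 'a \<Rightarrow> bool) \<Rightarrow> ('a \<Rightarrow> 'a) \<Rightarrow> 'a \<Rightarrow> 'a \<Rightarrow> ereal" where
  "height le T a b = Inf ((\<lambda>m. ereal (real_of_int m)) ` {m::int. le a (Tpow T m b)})"

end

theory Submission
  imports Defs
begin

lemma Tpow_Suc:
  assumes "bij T"
  shows "Tpow T (i + 1) x = T (Tpow T i x)"
proof (cases "0 \<le> i")
  case True
  then have "nat (i+1) = Suc (nat i)" by simp
  then show ?thesis using True by (simp add: Tpow_def)
next
  case False
  then have n: "nat (- i) = Suc (nat (- (i+1)))" by simp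
  show ?thesis
  proof (cases "i + 1 = 0")
    case True
    then have "nat (-i) = Suc 0" by simp
    then show ?thesis using False True assms
      by (simp add: Tpow_def bij_is_surj surj_f_inv_f)
  next
    case F2: False
    then have "\<not> 0 \<le> i + 1" using False by simp
    then show ?thesis using False assms n
      by (simp add: Tpow_def bij_is_surj surj_f_inv_f)
  qed
qed

lemma Tpow_add_nat:
  assumes "bij T"
  shows "Tpow T (i + int k) x = (T ^^ k) (Tpow T i x)"
proof (induction k)
  case 0
  then show ?case by simp
next
  case (Suc k)
  have "Tpow T (i + int (Suc k)) x = Tpow T ((i + int k) + 1) x" by (simp add: ac_simps)
  also have "\<dots> = T (Tpow T (i + int k) x)" using Tpow_Suc[OF assms] by blast
  finally show ?case using Suc by simp
qed

lemma le_pow: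
  assumes "\<forall>a b. le a b \<longleftrightarrow> le (T a) (T b)"
  shows "le x y \<longleftrightarrow> le ((T ^^ k) x) ((T ^^ k) y)"
  by (induction k) (use assms in auto)

lemma key:
  assumes "order_preserving_bij le T"
  shows "completion le T a (Tpow T m b) \<longleftrightarrow> (\<exists>k::nat. le a (Tpow T (m - int k) b))"
proof -
  have b: "bij T" and p: "\<forall>a b. le a b \<longleftrightarrow> le (T a) (T b)"
    using assms by (auto simp: order_preserving_bij_def)
  have "le ((T ^^ k) a) (Tpow T m b) \<longleftrightarrow> le a (Tpow T (m - int k) b)" for k
  proof -
    have "Tpow T m b = (T ^^ k) (Tpow T (m - int k) b)"
      using Tpow_add_nat[OF b, of "m - int k" k b] by simp
    then show ?thesis using le_pow[OF p, of a "Tpow T (m - int k) b" k] by simp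
  qed
  then show ?thesis by (simp add: completion_def)
qed

theorem proposition3p13:
  fixes le :: "'a \<Rightarrow> 'a \<Rightarrow> bool" and T :: "'a \<Rightarrow> 'a"
  assumes "quasi_total_triple le T"
  shows "\<forall>a b. height (completion le T) T a b = height le T a b"
proof (intro allI)
  fix a b
  have op: "order_preserving_bij le T"
    using assms by (simp add: quasi_total_triple_def dominant_def)
  let ?f = "\<lambda>m::int. ereal (real_of_int m)"
  define S where "S = {m::int. le a (Tpow T m b)}"
  define S' where "S' = {m::int. completion le T a (Tpow T m b)}"
  have sub: "S \<subseteq> S'"
    unfolding S_def S'_def using key[OF op] by (metis (mono_tags, lifting) Collect_mono diff_zero of_nat_0)
  have dom: "\<forall>y\<in>?f ` S'. \<exists>x\<in>?f ` S. x \<le> y"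
  proof
    fix y assume "y \<in> ?f ` S'"
    then obtain m where m: "m \<in> S'" "y = ?f m" by auto
    then obtain k :: nat where "le a (Tpow T (m - int k) b)"
      using key[OF op] unfolding S'_def by auto
    then have "m - int k \<in> S" by (simp add: S_def)
    moreover have "?f (m - int k) \<le> y" using m by simp
    ultimately show "\<exists>x\<in>?f ` S. x \<le> y" by blast
  qed
  have "Inf (?f ` S) \<le> Inf (?f ` S')" using dom by (intro Inf_mono) blast
  moreover have "Inf (?f ` S') \<le> Inf (?f ` S)" using sub by (intro Inf_superset_mono) auto
  ultimately have "Inf (?f ` S') = Inf (?f ` S)" by simp
  then show "height (completion le T) T a b = height le T a b"
    by (simp add: height_def S_def S'_def)
qed

end
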